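(* The graph $(C_3\cup P_2)+C_3$ is 1-planar.
   Context: A graph is 1-planar if it has a drawing in the plane in which each edge is crossed at most once. The join $G+H$ is obtained from vertex-disjoint copies of $G$ and $H$ by adding all edges between $V(G)$ and $V(H)$. $C_3$ is the triangle, $P_2$ is a single edge, $\cup$ is disjoint union. *)

theory Defs
  imports "HOL-Analysis.Analysis"
begin

text \<open>A (finite simple) graph is a pair (V, E) of a vertex set and a set of
  edges, each edge being a 2-element subset of V.\<close>

type_synonym 'v graph = "'v set \<times> 'v set set"

definition C3 :: "nat graph" where
  "C3 = ({0,1,2}, {{0,1},{1,2},{0,2}})"

definition P2 :: "nat graph" where
  "P2 = ({0,1}, {{0,1}})"

definition disj_union :: "'a graph \<Rightarrow> 'b graph \<Rightarrow> ('a + 'b) graph" where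
  "disj_union G H = (Inl ` fst G \<union> Inr ` fst H,
                     (\<lambda>e. Inl ` e) ` snd G \<union> (\<lambda>e. Inr ` e) ` snd H)"

definition join :: "'a graph \<Rightarrow> 'b graph \<Rightarrow> ('a + 'b) graph" where
  "join G H = (Inl ` fst G \<union> Inr ` fst H,
               (\<lambda>e. Inl ` e) ` snd G \<union> (\<lambda>e. Inr ` e) ` snd H
               \<union> {{Inl u, Inr v} | u v. u \<in> fst G \<and> v \<in> fst H})"

definition drawing :: "'v graph \<Rightarrow> ('v \<Rightarrow> complex) \<Rightarrow> ('v set \<Rightarrow> real \<Rightarrow> complex) \<Rightarrow> bool" where
  "drawing G p c \<longleftrightarrow>
     inj_on p (fst G) \<and>
     (\<forall>e\<in>snd G. \<exists>u v. e = {u, v} \<and> u \<noteq> v \<and> u \<in> fst G \<and> v \<in> fst G \<and>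
        arc (c e) \<and> pathstart (c e) = p u \<and> pathfinish (c e) = p v \<and>
        path_image (c e) \<inter> p ` fst G = {p u, p v})"

definition crossings :: "'v graph \<Rightarrow> ('v \<Rightarrow> complex) \<Rightarrow> ('v set \<Rightarrow> real \<Rightarrow> complex)
                         \<Rightarrow> 'v set \<Rightarrow> ('v set \<times> complex) set" where
  "crossings G p c e = {(f, z). f \<in> snd G \<and> f \<noteq> e \<and>
      z \<in> path_image (c e) \<inter> path_image (c f) - p ` fst G}"

definition one_planar :: "'v graph \<Rightarrow> bool" where
  "one_planar G \<longleftrightarrow> (\<exists>p c. drawing G p c \<and>
      (\<forall>e\<in>snd G. \<forall>x\<in>crossings G p c e. \<forall>y\<in>crossings G p c e. x = y))"

end

theory Submission imports Defs begin
definition crc :: "complex \<Rightarrow> complex \<Rightarrow> complex \<Rightarrow> real" where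
  "crc a b z = (Re b - Re a) * (Im z - Im a) - (Im b - Im a) * (Re z - Re a)"

lemma seg_param:
  assumes "z \<in> closed_segment a (b::complex)"
  obtains t where "0 \<le> t" "t \<le> 1" "Re z = Re a + t * (Re b - Re a)" "Im z = Im a + t * (Im b - Im a)"
proof -
  from assms obtain t where t: "0 \<le> t" "t \<le> 1" "z = (1 - t) *\<^sub>R a + t *\<^sub>R b"
    by (auto simp: closed_segment_def)
  show ?thesis by (rule that[OF t(1,2)]) (simp_all add: t(3) algebra_simps)
qed

lemma crc_on_seg: assumes "z \<in> closed_segment a b" shows "crc a b z = 0"
proof -
  obtain t where t: "Re z = Re a + t * (Re b - Re a)" "Im z = Im a + t * (Im b - Im a)"
    using assms by (rule seg_param)
  show ?thesis unfolding crc_def t by (simp add: algebra_simps)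
qed

lemma crc_sep:
  assumes "crc a b c * crc a b d > 0" "z \<in> closed_segment c d"
  shows "crc a b z \<noteq> 0"
proof -
  obtain t where t: "0 \<le> t" "t \<le> 1" "Re z = Re c + t * (Re d - Re c)" "Im z = Im c + t * (Im d - Im c)"
    using assms(2) by (rule seg_param)
  have e: "crc a b z = (1 - t) * crc a b c + t * crc a b d"
    by (simp add: crc_def t algebra_simps)
  have "(crc a b c > 0 \<and> crc a b d > 0) \<or> (crc a b c < 0 \<and> crc a b d < 0)"
    using assms(1) by (metis mult_neg_pos mult_pos_neg not_less_iff_gr_or_eq zero_less_mult_iff)
  then show ?thesis
  proof
    assume h: "crc a b c > 0 \<and> crc a b d > 0"
    have "(1 - t) * crc a b c \<ge> 0" "t * crc a b d \<ge> 0" using h t by auto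
    moreover have "(1 - t) * crc a b c > 0 \<or> t * crc a b d > 0"
      using h t by (cases "t = 0") auto
    ultimately show ?thesis unfolding e by linarith
  next
    assume h: "crc a b c < 0 \<and> crc a b d < 0"
    have "(1 - t) * crc a b c \<le> 0" "t * crc a b d \<le> 0" using h t by (auto simp: mult_nonneg_nonpos)
    moreover have "(1 - t) * crc a b c < 0 \<or> t * crc a b d < 0"
      using h t by (cases "t = 0") (auto simp: mult_pos_neg)
    ultimately show ?thesis unfolding e by linarith
  qed
qed

definition crv :: "complex \<Rightarrow> complex \<Rightarrow> complex \<Rightarrow> complex \<Rightarrow> real" where
  "crv a b c d = (Re b - Re a) * (Im d - Im c) - (Im b - Im a) * (Re d - Re c)"

lemma nonpar_unique:
  assumes "crv a b c d \<noteq> 0"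
    "z1 \<in> closed_segment a b" "z1 \<in> closed_segment c d"
    "z2 \<in> closed_segment a b" "z2 \<in> closed_segment c d"
  shows "z1 = z2"
proof -
  obtain t1 where t1: "Re z1 = Re a + t1 * (Re b - Re a)" "Im z1 = Im a + t1 * (Im b - Im a)"
    using assms(2) by (rule seg_param)
  obtain t2 where t2: "Re z2 = Re a + t2 * (Re b - Re a)" "Im z2 = Im a + t2 * (Im b - Im a)"
    using assms(4) by (rule seg_param)
  obtain s1 where s1: "Re z1 = Re c + s1 * (Re d - Re c)" "Im z1 = Im c + s1 * (Im d - Im c)"
    using assms(3) by (rule seg_param)
  obtain s2 where s2: "Re z2 = Re c + s2 * (Re d - Re c)" "Im z2 = Im c + s2 * (Im d - Im c)"
    using assms(5) by (rule seg_param)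
  have "(t1 - t2) * crv a b c d = (Re z1 - Re z2) * (Im d - Im c) - (Im z1 - Im z2) * (Re d - Re c)"
    by (simp add: crv_def t1 t2 algebra_simps)
  also have "\<dots> = 0" by (simp add: s1 s2 algebra_simps)
  finally have "t1 = t2" using assms(1) by simp
  then show ?thesis using t1 t2 by (simp add: complex_eq_iff)
qed


type_synonym vt = "(nat + nat) + nat"

definition crd :: "vt \<Rightarrow> int \<times> int" where
  "crd w = (case w of Inl (Inl n) \<Rightarrow> [(12,7),(0,0),(3,8)] ! n
                    | Inl (Inr n) \<Rightarrow> [(4,6),(3,4)] ! n
                    | Inr n \<Rightarrow> [(7,6),(1,1),(4,7)] ! n)"

definition pt :: "vt \<Rightarrow> complex" where
  "pt w = Complex (of_int (fst (crd w))) (of_int (snd (crd w)))"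

definition cri :: "vt \<Rightarrow> vt \<Rightarrow> vt \<Rightarrow> int" where
  "cri u v w = (fst (crd v) - fst (crd u)) * (snd (crd w) - snd (crd u))
             - (snd (crd v) - snd (crd u)) * (fst (crd w) - fst (crd u))"

definition npar :: "vt \<Rightarrow> vt \<Rightarrow> vt \<Rightarrow> vt \<Rightarrow> bool" where
  "npar u v x y = ((fst (crd v) - fst (crd u)) * (snd (crd y) - snd (crd x))
             - (snd (crd v) - snd (crd u)) * (fst (crd y) - fst (crd x)) \<noteq> 0)"

definition safe :: "vt \<Rightarrow> vt \<Rightarrow> vt \<Rightarrow> vt \<Rightarrow> bool" where
  "safe u v x y = (cri u v x * cri u v y > 0 \<or> cri x y u * cri x y v > 0
      \<or> ((x = u \<or> x = v \<or> y = u \<or> y = v) \<and> npar u v x y))"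

lemma crc_pt: "crc (pt u) (pt v) (pt w) = of_int (cri u v w)"
  by (simp add: crc_def cri_def pt_def)

lemma crv_pt_eq: "crv (pt u) (pt v) (pt x) (pt y) = of_int ((fst (crd v) - fst (crd u)) * (snd (crd y) - snd (crd x))
             - (snd (crd v) - snd (crd u)) * (fst (crd y) - fst (crd x)))"
  by (simp add: crv_def pt_def)

lemma crv_pt: "npar u v x y \<Longrightarrow> crv (pt u) (pt v) (pt x) (pt y) \<noteq> 0"
  unfolding npar_def crv_pt_eq of_int_eq_0_iff .

lemma sep_sound:
  assumes "cri u v x * cri u v y > 0"
  shows "closed_segment (pt u) (pt v) \<inter> closed_segment (pt x) (pt y) = {}"
proof -
  have h: "crc (pt u) (pt v) (pt x) * crc (pt u) (pt v) (pt y) > 0"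
    unfolding crc_pt of_int_mult[symmetric] of_int_0_less_iff by (rule assms)
  show ?thesis
  proof (rule equals0I)
    fix z assume "z \<in> closed_segment (pt u) (pt v) \<inter> closed_segment (pt x) (pt y)"
    then have z: "z \<in> closed_segment (pt u) (pt v)" "z \<in> closed_segment (pt x) (pt y)" by auto
    show False using crc_sep[OF h z(2)] crc_on_seg[OF z(1)] by simp
  qed
qed

lemma safe_sound:
  assumes "safe u v x y"
  shows "closed_segment (pt u) (pt v) \<inter> closed_segment (pt x) (pt y) \<subseteq> {pt u, pt v, pt x, pt y}"
proof -
  consider "cri u v x * cri u v y > 0" | "cri x y u * cri x y v > 0"
    | "(x = u \<or> x = v \<or> y = u \<or> y = v) \<and> npar u v x y"
    using assms unfolding safe_def by blast
  then show ?thesis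
  proof cases
    case 1 then show ?thesis using sep_sound[OF 1] by simp
  next
    case 2 then show ?thesis using sep_sound[OF 2] by (simp add: Int_commute)
  next
    case 3
    then have np: "crv (pt u) (pt v) (pt x) (pt y) \<noteq> 0" using crv_pt by blast
    from 3 obtain s where s: "s \<in> {pt u, pt v}" "s \<in> {pt x, pt y}" by blast
    have s1: "s \<in> closed_segment (pt u) (pt v)" "s \<in> closed_segment (pt x) (pt y)"
      using s by auto
    show ?thesis
    proof
      fix z assume "z \<in> closed_segment (pt u) (pt v) \<inter> closed_segment (pt x) (pt y)"
      then have "z = s" using nonpar_unique[OF np _ _ s1] by simp
      then show "z \<in> {pt u, pt v, pt x, pt y}" using s by blast
    qed
  qed
qed

lemma not_on_seg: "cri u v w \<noteq> 0 \<Longrightarrow> pt w \<notin> closed_segment (pt u) (pt v)"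
  using crc_on_seg[of "pt w" "pt u" "pt v"] by (auto simp: crc_pt)


abbreviation "GG \<equiv> join (disj_union C3 P2) C3"

definition VS :: "vt list" where
  "VS = [Inl (Inl 0), Inl (Inl 1), Inl (Inl 2), Inl (Inr 0), Inl (Inr 1), Inr 0, Inr 1, Inr 2]"

definition ES :: "(vt \<times> vt) list" where
  "ES = [(Inl (Inl 0), Inl (Inl 1)), (Inl (Inl 1), Inl (Inl 2)), (Inl (Inl 0), Inl (Inl 2)),
         (Inl (Inr 0), Inl (Inr 1)), (Inr 0, Inr 1), (Inr 1, Inr 2), (Inr 0, Inr 2)]
      @ concat (map (\<lambda>w. [(w, Inr 0), (w, Inr 1), (w, Inr 2)]) (take 5 VS))"

lemma fstG: "fst GG = set VS"
  by (auto simp: join_def disj_union_def C3_def P2_def VS_def)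

lemma compr_UN: "{{Inl u, Inr v} |u v. u \<in> S \<and> v \<in> T} = (\<Union>u\<in>S. \<Union>v\<in>T. {{Inl u, Inr v}})"
  by auto

lemma sndG: "snd GG = (\<lambda>(u,v). {u,v}) ` set ES"
  unfolding join_def disj_union_def C3_def P2_def ES_def VS_def fst_conv snd_conv compr_UN
  by (simp add: insert_commute)


lemma chk_inj: "distinct (map crd VS)"
  by (simp add: VS_def crd_def)

lemma chk_draw: "\<forall>(u,v)\<in>set ES. u \<noteq> v \<and> u \<in> set VS \<and> v \<in> set VS \<and> (\<forall>w\<in>set VS. w = u \<or> w = v \<or> cri u v w \<noteq> 0)"
  by (simp add: ES_def VS_def cri_def crd_def)

definition badl :: "vt \<Rightarrow> vt \<Rightarrow> (vt \<times> vt) list" where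
  "badl u v = filter (\<lambda>(x,y). (x,y) \<noteq> (u,v) \<and> \<not> safe u v x y) ES"

lemma chk_cross: "\<forall>(u,v)\<in>set ES. (case badl u v of [] \<Rightarrow> True | [(x,y)] \<Rightarrow> npar u v x y | _ \<Rightarrow> False)"
  unfolding badl_def ES_def VS_def safe_def npar_def cri_def crd_def by code_simp


definition ends :: "vt set \<Rightarrow> vt \<times> vt" where
  "ends e = (SOME uv. e = {fst uv, snd uv})"

definition cc :: "vt set \<Rightarrow> real \<Rightarrow> complex" where
  "cc e = linepath (pt (fst (ends e))) (pt (snd (ends e)))"

lemma ends_eq: "{fst (ends {u,v}), snd (ends {u,v})} = {u,v}"
proof -
  have "\<exists>uv. {u,v} = {fst uv, snd uv}" by (rule exI[of _ "(u,v)"]) simp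
  then show ?thesis unfolding ends_def by (metis (mono_tags, lifting) someI_ex)
qed

lemma cc_img: "path_image (cc {u,v}) = closed_segment (pt u) (pt v)"
proof -
  have "{fst (ends {u,v}), snd (ends {u,v})} = {u,v}" by (rule ends_eq)
  then show ?thesis unfolding cc_def path_image_linepath
    by (metis closed_segment_commute doubleton_eq_iff)
qed

lemma pt_inj: "inj_on pt (set VS)"
proof
  fix x y assume xy: "x \<in> set VS" "y \<in> set VS" "pt x = pt y"
  then have "crd x = crd y" by (simp add: pt_def complex_eq_iff prod_eq_iff)
  then show "x = y" using chk_inj xy(1,2) by (simp add: distinct_map inj_on_def)
qed

lemma ES_seg_V:
  assumes "(u,v) \<in> set ES"
  shows "closed_segment (pt u) (pt v) \<inter> pt ` set VS = {pt u, pt v}"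
proof -
  from chk_draw assms have h: "u \<in> set VS" "v \<in> set VS" "\<forall>w\<in>set VS. w = u \<or> w = v \<or> cri u v w \<noteq> 0"
    by auto
  show ?thesis
  proof
    show "closed_segment (pt u) (pt v) \<inter> pt ` set VS \<subseteq> {pt u, pt v}"
      using h(3) not_on_seg by fastforce
    show "{pt u, pt v} \<subseteq> closed_segment (pt u) (pt v) \<inter> pt ` set VS"
      using h(1,2) by auto
  qed
qed

theorem lemma13:
  shows "one_planar (join (disj_union C3 P2) C3)"
  unfolding one_planar_def
proof (intro exI conjI)
  show "drawing GG pt cc"
    unfolding drawing_def fstG
  proof (intro conjI ballI)
    show "inj_on pt (set VS)" by (rule pt_inj)
    fix e assume "e \<in> snd GG"
    then obtain u v where uv: "(u,v) \<in> set ES" "e = {u,v}" unfolding sndG by auto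
    from chk_draw uv(1) have h: "u \<noteq> v" "u \<in> set VS" "v \<in> set VS" by auto
    define u' where "u' = fst (ends e)"
    define v' where "v' = snd (ends e)"
    have e': "{u',v'} = {u,v}" unfolding u'_def v'_def uv(2) by (rule ends_eq)
    have c': "cc e = linepath (pt u') (pt v')" unfolding cc_def u'_def v'_def ..
    have d: "u' \<noteq> v'" "u' \<in> set VS" "v' \<in> set VS" using e' h by (auto simp: doubleton_eq_iff)
    have ne: "pt u' \<noteq> pt v'"
    proof
      assume "pt u' = pt v'"
      then have "u' = v'" using inj_onD[OF pt_inj _ d(2,3)] by blast
      then show False using d(1) by blast
    qed
    have cs: "closed_segment (pt u') (pt v') = closed_segment (pt u) (pt v)"
      using e' by (metis closed_segment_commute doubleton_eq_iff)
    have pp: "{pt u', pt v'} = {pt u, pt v}" using e' by (auto simp: doubleton_eq_iff)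
    have "e = {u', v'}" using e' uv(2) by simp
    moreover have "arc (cc e)" unfolding c' using ne by simp
    moreover have "pathstart (cc e) = pt u'" "pathfinish (cc e) = pt v'" unfolding c' by simp_all
    moreover have "path_image (cc e) \<inter> pt ` set VS = {pt u', pt v'}"
      unfolding c' path_image_linepath cs pp by (rule ES_seg_V[OF uv(1)])
    ultimately show "\<exists>u v. e = {u, v} \<and> u \<noteq> v \<and> u \<in> set VS \<and> v \<in> set VS \<and>
        arc (cc e) \<and> pathstart (cc e) = pt u \<and> pathfinish (cc e) = pt v \<and>
        path_image (cc e) \<inter> pt ` set VS = {pt u, pt v}"
      using d by blast
  qed
  show "\<forall>e\<in>snd GG. \<forall>x\<in>crossings GG pt cc e. \<forall>y\<in>crossings GG pt cc e. x = y"
  proof (intro ballI)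
    fix e x y assume e: "e \<in> snd GG" and x: "x \<in> crossings GG pt cc e" and y: "y \<in> crossings GG pt cc e"
    from e obtain u v where uv: "(u,v) \<in> set ES" "e = {u,v}" unfolding sndG by auto
    have key: "\<exists>x0 y0. f = {x0,y0} \<and> (x0,y0) \<in> set (badl u v) \<and>
                 z \<in> closed_segment (pt u) (pt v) \<inter> closed_segment (pt x0) (pt y0)"
      if "(f,z) \<in> crossings GG pt cc e" for f z
    proof -
      from that have f: "f \<in> snd GG" "f \<noteq> e"
        and z: "z \<in> path_image (cc e) \<inter> path_image (cc f)" "z \<notin> pt ` fst GG"
        unfolding crossings_def by auto
      from f(1) obtain x0 y0 where xy: "(x0,y0) \<in> set ES" "f = {x0,y0}" unfolding sndG by auto
      have zz: "z \<in> closed_segment (pt u) (pt v) \<inter> closed_segment (pt x0) (pt y0)"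
        using z(1) uv(2) xy(2) by (simp add: cc_img)
      have "(x0,y0) \<noteq> (u,v)" using f(2) uv(2) xy(2) by auto
      moreover have "\<not> safe u v x0 y0"
      proof
        assume "safe u v x0 y0"
        then have "z \<in> {pt u, pt v, pt x0, pt y0}" using safe_sound zz by blast
        moreover have "u \<in> set VS" "v \<in> set VS" "x0 \<in> set VS" "y0 \<in> set VS"
          using chk_draw uv(1) xy(1) by auto
        ultimately show False using z(2) unfolding fstG by auto
      qed
      ultimately have "(x0,y0) \<in> set (badl u v)" using xy(1) unfolding badl_def by auto
      then show ?thesis using xy(2) zz by blast
    qed
    obtain f1 z1 where x1: "x = (f1,z1)" by (cases x)
    obtain f2 z2 where y1: "y = (f2,z2)" by (cases y)
    from key[of f1 z1] x x1 obtain a1 b1 where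
      A: "f1 = {a1,b1}" "(a1,b1) \<in> set (badl u v)" "z1 \<in> closed_segment (pt u) (pt v) \<inter> closed_segment (pt a1) (pt b1)"
      by auto
    from key[of f2 z2] y y1 obtain a2 b2 where
      B: "f2 = {a2,b2}" "(a2,b2) \<in> set (badl u v)" "z2 \<in> closed_segment (pt u) (pt v) \<inter> closed_segment (pt a2) (pt b2)"
      by auto
    have cs: "case badl u v of [] \<Rightarrow> True | [(x,y)] \<Rightarrow> npar u v x y | _ \<Rightarrow> False"
      using chk_cross uv(1) by auto
    obtain a b where bl: "badl u v = [(a,b)]" "npar u v a b"
    proof (cases "badl u v")
      case Nil then show ?thesis using A(2) by simp
    next
      case (Cons p r)
      then show ?thesis using cs that by (cases p; cases r) auto
    qed
    have "a1 = a" "b1 = b" "a2 = a" "b2 = b" using A(2) B(2) bl(1) by auto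
    then have "z1 = z2" using nonpar_unique[OF crv_pt[OF bl(2)]] A(3) B(3) by blast
    then show "x = y" using x1 y1 A(1) B(1) \<open>a1 = a\<close> \<open>b1 = b\<close> \<open>a2 = a\<close> \<open>b2 = b\<close> by simp
  qed
qed

end
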